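(* Let $m\ge 3$ and let $T_m$ be the graph defined below. Then the eigenvalues of $T_m$ (with multiplicity) are \[ \cos\tfrac{2\pi j}{m}+\cos\tfrac{2\pi \ell}{m}\pm\sqrt{\left(\cos\tfrac{2\pi j}{m}-\cos\tfrac{2\pi \ell}{m}\right)^2+1} \] for all $(j,\ell)\in\mathbb{Z}_m\times\mathbb{Z}_m$ (both signs).
   Context: For $m\ge3$, $T_m$ is the cubic graph on $2m^2$ vertices $\{x^+_{i,j},\,x^-_{i,j}\mid i,j\in\mathbb{Z}_m\}$ with edges $\{x^+_{i,j},x^+_{i,j+1}\}$, $\{x^-_{i,j},x^-_{i,j+1}\}$ and $\{x^+_{i,j},x^-_{j,i}\}$ for all $i,j\in\mathbb{Z}_m$. (It is the vertex truncation of the standard regular embedding of $K_{m,m}$.) Eigenvalues are those of the adjacency matrix. *)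

theory Defs
  imports Complex_Main "Jordan_Normal_Form.Char_Poly"
begin

text \<open>Vertices of T_m are encoded by naturals v < 2*m^2: v corresponds to
  the triple (s, i, j) = (v div m^2, (v div m) mod m, v mod m), where
  s = 0 stands for x^+_{i,j} and s = 1 for x^-_{i,j}; i, j are residues mod m.\<close>

definition Tm_vertex :: "nat \<Rightarrow> nat \<Rightarrow> nat \<times> nat \<times> nat" where
  "Tm_vertex m v = (v div (m * m), (v div m) mod m, v mod m)"

definition Tm_adj :: "nat \<Rightarrow> nat \<times> nat \<times> nat \<Rightarrow> nat \<times> nat \<times> nat \<Rightarrow> bool" where
  "Tm_adj m u w = (case u of (s, i, j) \<Rightarrow> case w of (s', i', j') \<Rightarrow>
      (s = s' \<and> i = i' \<and> (j' = (j + 1) mod m \<or> j = (j' + 1) mod m))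
    \<or> (s = 0 \<and> s' = 1 \<and> i' = j \<and> j' = i)
    \<or> (s = 1 \<and> s' = 0 \<and> i' = j \<and> j' = i))"

definition Tm_adjacency :: "nat \<Rightarrow> real mat" where
  "Tm_adjacency m = mat (2 * m * m) (2 * m * m)
     (\<lambda>(u, w). if Tm_adj m (Tm_vertex m u) (Tm_vertex m w) then 1 else 0)"

end

theory Submission
  imports Defs
begin


lemma sum_split_mult: "(\<Sum>v<a*(b::nat). f v) = (\<Sum>q<a. \<Sum>r<b. f (q*b+r))"
proof -
  have "(\<Sum>v<a*(b::nat). f v) = (\<Sum>q<a. sum f {q*b..<q*b+b})"
    using sum.nat_group[of f b a] by simp
  also have "\<dots> = (\<Sum>q<a. \<Sum>r<b. f (q*b+r))"
  proof (rule sum.cong[OF refl])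
    fix q show "sum f {q*b..<q*b+b} = (\<Sum>r<b. f (q*b+r))"
      using sum.shift_bounds_nat_ivl[of f 0 "q*b" b] by (simp add: atLeast0LessThan ac_simps)
  qed
  finally show ?thesis .
qed

lemma prod_split_mult: "(\<Prod>v<a*(b::nat). f v) = (\<Prod>q<a. \<Prod>r<b. f (q*b+r))"
proof -
  have "(\<Prod>v<a*(b::nat). f v) = (\<Prod>q<a. prod f {q*b..<q*b+b})"
    using prod.nat_group[of f b a] by simp
  also have "\<dots> = (\<Prod>q<a. \<Prod>r<b. f (q*b+r))"
  proof (rule prod.cong[OF refl])
    fix q show "prod f {q*b..<q*b+b} = (\<Prod>r<b. f (q*b+r))"
      using prod.shift_bounds_nat_ivl[of f 0 "q*b" b] by (simp add: atLeast0LessThan ac_simps)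
  qed
  finally show ?thesis .
qed

lemma sum3: "(\<Sum>v<2*m*(m::nat). f v) = (\<Sum>s<(2::nat). \<Sum>i<m. \<Sum>j<m. f ((s*m+i)*m+j))"
  by (simp add: sum_split_mult)

lemma prod3: "(\<Prod>v<2*m*(m::nat). f v) = (\<Prod>s<(2::nat). \<Prod>i<m. \<Prod>j<m. f ((s*m+i)*m+j))"
  by (simp add: prod_split_mult)

lemma vertex_enc: assumes "i < m" "j < m"
  shows "Tm_vertex m ((s*m+i)*m+j) = (s,i,j)"
proof -
  have m: "m > 0" using assms by auto
  have d: "((s*m+i)*m+j) div m = s*m+i" using assms by simp
  have "((s*m+i)*m+j) div (m*m) = s"
    by (metis d div_mult2_eq assms(1) div_mult_self1 div_less add.commute m less_not_refl2 add_0 mult.commute)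
  then show ?thesis using assms d unfolding Tm_vertex_def by simp
qed

lemma vertex_dec: assumes "k < 2*m*m"
  obtains t a b where "k = (t*m+a)*m+b" "t < 2" "a < m" "b < m" "Tm_vertex m k = (t,a,b)"
proof -
  have m: "m > 0" using assms by (cases m) auto
  define t where "t = k div (m*m)"
  define a where "a = (k div m) mod m"
  define b where "b = k mod m"
  have "k = (t*m+a)*m+b" unfolding t_def a_def b_def
    by (metis div_mult2_eq div_mult_mod_eq mult.commute)
  moreover have "t < 2" unfolding t_def using assms
    by (simp add: less_mult_imp_div_less mult.assoc)
  moreover have "a < m" "b < m" unfolding a_def b_def using m by auto
  moreover have "Tm_vertex m k = (t,a,b)" unfolding Tm_vertex_def t_def a_def b_def by simp
  ultimately show ?thesis using that by blast
qed

definition E :: "nat \<Rightarrow> int \<Rightarrow> complex" where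
  "E m t = cis (2 * pi * of_int t / of_nat m)"

lemma E_add: "E m (s + t) = E m s * E m t"
  by (simp add: E_def cis_mult add_divide_distrib distrib_left)

lemma E_diff: "E m (s - t) = E m s * E m (- t)"
  using E_add[of m s "-t"] by simp

lemma E_zero[simp]: "E m 0 = 1" by (simp add: E_def)

lemma E_mult_eq: "x + y = z \<Longrightarrow> E m x * E m y = E m z"
  by (simp add: E_add[symmetric])

lemma E_period: assumes "m > 0" shows "E m (int m * q) = 1"
proof -
  have "2 * pi * of_int (int m * q) / of_nat m = 2 * pi * of_int q" using assms by simp
  then show ?thesis unfolding E_def by simp
qed

lemma E_cong: assumes "m > 0" "s mod int m = t mod int m" shows "E m s = E m t"
proof -
  have "int m dvd (s - t)" using assms(2) by (simp add: mod_eq_dvd_iff)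
  then obtain q where q: "s = t + int m * q" by (metis add.commute diff_add_cancel dvdE)
  show ?thesis unfolding q E_add E_period[OF assms(1)] by simp
qed

lemma E_pow: "E m (d * int i) = E m d ^ i"
  unfolding E_def DeMoivre by (simp add: field_simps)

lemma E_eq_1: assumes "m > 0" "E m d = 1" shows "int m dvd d"
proof -
  have "cos (2 * pi * of_int d / of_nat m) = 1" using assms(2) unfolding E_def
    by (metis cis.simps(1) one_complex.simps(1))
  then obtain n :: int where n: "2 * pi * of_int d / of_nat m = of_int n * 2 * pi"
    by (auto simp: cos_one_2pi_int)
  then have "of_int d = (of_int (n * int m) :: real)" using assms(1) by (simp add: field_simps)
  then have "d = n * int m" by linarith
  then show ?thesis by simp
qed

lemma E_sum: assumes "m > 0"
  shows "(\<Sum>i<m. E m (d * int i)) = (if int m dvd d then of_nat m else 0)"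
proof (cases "int m dvd d")
  case True
  then obtain q where q: "d = int m * q" by blast
  have "E m (d * int i) = 1" for i using E_period[OF assms, of "q * int i"] by (simp add: q ac_simps)
  then show ?thesis using True by simp
next
  case False
  then have ne: "E m d \<noteq> 1" using E_eq_1[OF assms] by blast
  have "E m d ^ m = 1" using E_pow[of m d m] E_period[OF assms, of d] by (simp add: ac_simps)
  then have "(\<Sum>i<m. E m d ^ i) = 0" using geometric_sum[OF ne, of m] by simp
  then show ?thesis using False by (simp add: E_pow)
qed

lemma E_cos: "E m d + E m (-d) = of_real (2 * cos (2 * pi * of_int d / of_nat m))"
  by (simp add: E_def complex_eq_iff cis.sel)

lemma dvd_diff_small: assumes "a < m" "b < m" shows "int m dvd (int a - int b) \<longleftrightarrow> a = b"
proof
  assume "int m dvd (int a - int b)"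
  then obtain q where q: "int a - int b = int m * q" by blast
  have "q = 0"
  proof (rule ccontr)
    assume "q \<noteq> 0"
    then have "\<bar>q\<bar> \<ge> 1" by linarith
    then have "int m * \<bar>q\<bar> \<ge> int m * 1" by (intro mult_left_mono) auto
    then have "\<bar>int m * q\<bar> \<ge> int m" by (simp add: abs_mult)
    then show False using q assms by linarith
  qed
  then show "a = b" using q by simp
qed simp

definition cval :: "nat \<Rightarrow> nat \<Rightarrow> real" where
  "cval m a = cos (2 * pi * real a / real m)"
definition sg :: "nat \<Rightarrow> real" where "sg t = (if t = 0 then 1 else -1)"
definition rr :: "nat \<Rightarrow> nat \<Rightarrow> nat \<Rightarrow> real" where
  "rr m a b = sqrt ((cval m a - cval m b)^2 + 1)"
definition bet :: "nat \<Rightarrow> nat \<Rightarrow> nat \<Rightarrow> nat \<Rightarrow> real" where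
  "bet m t a b = cval m a - cval m b + sg t * rr m a b"
definition mu :: "nat \<Rightarrow> nat \<Rightarrow> nat \<Rightarrow> nat \<Rightarrow> real" where
  "mu m t a b = cval m a + cval m b + sg t * rr m a b"

lemma rr_sq: "(rr m a b)^2 = (cval m a - cval m b)^2 + 1"
  unfolding rr_def by simp

lemma sg_sq: "(sg t)^2 = 1" unfolding sg_def by simp

lemma mu_bet: "mu m t a b = bet m t a b + 2 * cval m b"
  unfolding mu_def bet_def by simp

lemma bet_eq: "bet m t a b * (2 * cval m a) + 1 = mu m t a b * bet m t a b"
proof -
  define x where "x = cval m a"
  define y where "y = cval m b"
  define r where "r = rr m a b"
  define s where "s = sg t"
  have r2: "r^2 = (x-y)^2 + 1" unfolding r_def x_def y_def by (rule rr_sq)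
  have s2: "s^2 = 1" unfolding s_def by (rule sg_sq)
  have "(x - y + s*r) * (2*x) + 1 = (x + y + s*r) * (x - y + s*r)"
  proof -
    have "(x + y + s*r) * (x - y + s*r) - ((x - y + s*r) * (2*x) + 1) = s^2 * r^2 - (x-y)^2 - 1"
      by (simp add: algebra_simps power2_eq_square)
    also have "\<dots> = 0" using r2 s2 by simp
    finally show ?thesis by simp
  qed
  then show ?thesis unfolding bet_def mu_def x_def[symmetric] y_def[symmetric] r_def[symmetric] s_def[symmetric] .
qed

lemma bet_prod: assumes "t < 2" "t' < 2" "t \<noteq> t'"
  shows "bet m t a b * bet m t' a b = -1"
proof -
  have st: "sg t * sg t' = -1" using assms unfolding sg_def by auto
  have "bet m t a b * bet m t' a b = (cval m a - cval m b)^2 + (sg t + sg t') * (cval m a - cval m b) * rr m a b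
     + (sg t * sg t') * (rr m a b)^2"
    unfolding bet_def by (simp add: algebra_simps power2_eq_square)
  also have "sg t + sg t' = 0" using assms unfolding sg_def by auto
  finally show ?thesis using st rr_sq[of m a b] by simp
qed

definition Pent :: "nat \<Rightarrow> nat \<Rightarrow> nat \<Rightarrow> nat \<Rightarrow> nat \<Rightarrow> nat \<Rightarrow> nat \<Rightarrow> complex" where
  "Pent m s i j t a b = (if s = 0 then E m (int a * int i + int b * int j)
      else of_real (bet m t a b) * E m (int b * int i + int a * int j))"

definition Wt :: "nat \<Rightarrow> nat \<Rightarrow> nat \<Rightarrow> nat \<Rightarrow> complex" where
  "Wt m t a b = of_real (real (m*m) * (1 + (bet m t a b)^2))"

definition Qent :: "nat \<Rightarrow> nat \<Rightarrow> nat \<Rightarrow> nat \<Rightarrow> nat \<Rightarrow> nat \<Rightarrow> nat \<Rightarrow> complex" where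
  "Qent m t a b s i j = (if s = 0 then E m (-(int a * int i + int b * int j))
      else of_real (bet m t a b) * E m (-(int b * int i + int a * int j))) / Wt m t a b"

lemma E_mult4: "-X + Y = U + V \<Longrightarrow> E m (-X) * E m Y = E m U * E m V"
  by (metis E_add)

lemma sum_sep: "(\<Sum>i<m. \<Sum>j<m. c * (F i * G j)) = c * ((\<Sum>i<m. F i) * (\<Sum>j<m. G j))"
  for c :: complex
proof -
  have "c * ((\<Sum>i<m. F i) * (\<Sum>j<m. G j)) = c * (\<Sum>i<m. \<Sum>j<m. F i * G j)"
    by (simp only: sum_product)
  also have "\<dots> = (\<Sum>i<m. \<Sum>j<m. c * (F i * G j))"
    by (simp add: sum_distrib_left)
  finally show ?thesis by simp
qed

lemma QP_entry:
  assumes m: "m > 0" and t: "t < 2" "t' < 2" and ab: "a < m" "b < m" "a' < m" "b' < m"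
  shows "(\<Sum>s<2. \<Sum>i<m. \<Sum>j<m. Qent m t a b s i j * Pent m s i j t' a' b')
     = (if t = t' \<and> a = a' \<and> b = b' then 1 else 0)"
proof -
  let ?W = "Wt m t a b"
  let ?B = "complex_of_real (bet m t a b)"
  let ?B' = "complex_of_real (bet m t' a' b')"
  have h0: "Qent m t a b 0 i j * Pent m 0 i j t' a' b'
      = (1 / ?W) * (E m ((int a' - int a) * int i) * E m ((int b' - int b) * int j))" for i j
  proof -
    have "E m (-(int a * int i + int b * int j)) * E m (int a' * int i + int b' * int j)
        = E m ((int a' - int a) * int i) * E m ((int b' - int b) * int j)"
      by (rule E_mult4) (simp add: algebra_simps)
    then show ?thesis unfolding Qent_def Pent_def by simp
  qed
  have h1: "Qent m t a b (Suc 0) i j * Pent m (Suc 0) i j t' a' b'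
      = (?B * ?B' / ?W) * (E m ((int b' - int b) * int i) * E m ((int a' - int a) * int j))" for i j
  proof -
    have "E m (-(int b * int i + int a * int j)) * E m (int b' * int i + int a' * int j)
        = E m ((int b' - int b) * int i) * E m ((int a' - int a) * int j)"
      by (rule E_mult4) (simp add: algebra_simps)
    then show ?thesis unfolding Qent_def Pent_def by (simp add: field_simps)
  qed
  have sa: "(\<Sum>i<m. E m ((int a' - int a) * int i)) = (if a' = a then of_nat m else 0)"
    using E_sum[OF m] dvd_diff_small[OF ab(3) ab(1)] by simp
  have sb: "(\<Sum>i<m. E m ((int b' - int b) * int i)) = (if b' = b then of_nat m else 0)"
    using E_sum[OF m] dvd_diff_small[OF ab(4) ab(2)] by simp
  have "(\<Sum>s<2. \<Sum>i<m. \<Sum>j<m. Qent m t a b s i j * Pent m s i j t' a' b')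
     = (\<Sum>i<m. \<Sum>j<m. Qent m t a b 0 i j * Pent m 0 i j t' a' b')
     + (\<Sum>i<m. \<Sum>j<m. Qent m t a b (Suc 0) i j * Pent m (Suc 0) i j t' a' b')"
    by (simp add: numeral_2_eq_2)
  also have "\<dots> = (1 / ?W) * ((if a' = a then of_nat m else 0) * (if b' = b then of_nat m else 0))
      + (?B * ?B' / ?W) * ((if b' = b then of_nat m else 0) * (if a' = a then of_nat m else 0))"
    unfolding h0 h1 sum_sep sa sb by simp
  also have "\<dots> = (if t = t' \<and> a = a' \<and> b = b' then 1 else 0)"
  proof (cases "a = a' \<and> b = b'")
    case False then show ?thesis by auto
  next
    case True
    have pos: "1 + (bet m t a b)^2 > 0" by (smt (verit) zero_le_power2)
    have "real (m*m) * (1 + (bet m t a b)^2) \<noteq> 0" using m pos by simp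
    then have Wnz: "?W \<noteq> 0" unfolding Wt_def by (metis of_real_eq_0_iff)
    show ?thesis
    proof (cases "t = t'")
      case True
      with \<open>a = a' \<and> b = b'\<close> have "?B' = ?B" by simp
      have Weq: "?W = (of_nat m * of_nat m) * (1 + ?B * ?B)" unfolding Wt_def by (simp add: power2_eq_square)
      have "(1 / ?W) * (of_nat m * of_nat m) + (?B * ?B / ?W) * (of_nat m * of_nat m)
         = ((of_nat m * of_nat m) * (1 + ?B * ?B)) / ?W"
        by (simp add: add_divide_distrib algebra_simps)
      also have "\<dots> = 1" using Wnz Weq by simp
      finally have "(1 / ?W) * (of_nat m * of_nat m) + (?B * ?B' / ?W) * (of_nat m * of_nat m) = 1"
        using \<open>?B' = ?B\<close> by simp
      then show ?thesis using True \<open>a = a' \<and> b = b'\<close> by simp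
    next
      case False
      have "bet m t a b * bet m t' a b = -1" using bet_prod[OF t False] .
      then have "?B * ?B' = -1" using \<open>a = a' \<and> b = b'\<close>
        by (metis of_real_minus of_real_mult of_real_1)
      then have "(1 / ?W) * (of_nat m * of_nat m) + (?B * ?B' / ?W) * (of_nat m * of_nat m) = 0"
        by (simp add: field_simps)
      then show ?thesis using False \<open>a = a' \<and> b = b'\<close> by simp
    qed
  qed
  finally show ?thesis .
qed


lemma ymod: assumes "j0 < (m::nat)" shows "(j0+m-1) mod m = (if j0 = 0 then m - 1 else j0 - 1)"
proof (cases "j0 = 0")
  case False
  then have "j0 + m - 1 = (j0 - 1) + m" by (cases j0) auto
  moreover have "(j0 - 1 + m) mod m = j0 - 1" using assms by simp
  ultimately show ?thesis using False by simp
qed (use assms in simp)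

lemma xmod: assumes "j0 < (m::nat)" shows "(j0+1) mod m = (if j0 + 1 < m then j0 + 1 else 0)"
proof (cases "j0 + 1 < m")
  case False
  then have "j0 + 1 = m" using assms by simp
  then show ?thesis by simp
qed simp

lemma pred_iff: assumes "j < (m::nat)" "j0 < m"
  shows "(j0 = (j+1) mod m) \<longleftrightarrow> (j = (j0+m-1) mod m)"
  unfolding xmod[OF assms(1)] ymod[OF assms(2)] using assms by auto

lemma adj_char: assumes "s0 < 2" "s < 2" "i0 < m" "j0 < m" "i < m" "j < m"
  shows "Tm_adj m (s0,i0,j0) (s,i,j) \<longleftrightarrow>
    (s = s0 \<and> i = i0 \<and> (j = (j0+1) mod m \<or> j = (j0+m-1) mod m)) \<or> (s = 1 - s0 \<and> i = j0 \<and> j = i0)"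
  using pred_iff[OF assms(6) assms(4)] assms(1,2) unfolding Tm_adj_def by auto

lemma delta3:
  assumes "finite S" "finite I" "finite J" "s0 \<in> S" "i0 \<in> I"
  shows "(\<Sum>s\<in>S. \<Sum>i\<in>I. \<Sum>j\<in>J. if s = s0 \<and> i = i0 \<and> R j then g s i j else (0::complex))
     = (\<Sum>j\<in>J. if R j then g s0 i0 j else 0)"
proof -
  have "(\<Sum>s\<in>S. \<Sum>i\<in>I. \<Sum>j\<in>J. if s = s0 \<and> i = i0 \<and> R j then g s i j else (0::complex))
      = (\<Sum>s\<in>S. if s = s0 then (\<Sum>i\<in>I. if i = i0 then (\<Sum>j\<in>J. if R j then g s i j else 0) else 0) else 0)"
    by (rule sum.cong[OF refl]) (auto intro!: sum.cong)
  then show ?thesis using assms by simp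
qed

lemma sum_two: assumes "x \<noteq> y" "x < (m::nat)" "y < m"
  shows "(\<Sum>j<m. if j = x \<or> j = y then h j else (0::complex)) = h x + h y"
proof -
  have e: "{..<m} \<inter> {j. j = x \<or> j = y} = {x,y}" using assms by auto
  show ?thesis using assms by (simp add: sum.If_cases e)
qed

lemma sum_adj:
  fixes g :: "nat \<Rightarrow> nat \<Rightarrow> nat \<Rightarrow> complex"
  assumes m: "m \<ge> 3" and s0: "s0 < 2" and ij: "i0 < m" "j0 < m"
  shows "(\<Sum>s<2. \<Sum>i<m. \<Sum>j<m. (if Tm_adj m (s0,i0,j0) (s,i,j) then 1 else 0) * g s i j)
     = g s0 i0 ((j0+1) mod m) + g s0 i0 ((j0+m-1) mod m) + g (1-s0) j0 i0"
proof -
  let ?x = "(j0+1) mod m" and ?y = "(j0+m-1) mod m"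
  have "(\<Sum>s<2. \<Sum>i<m. \<Sum>j<m. (if Tm_adj m (s0,i0,j0) (s,i,j) then 1 else 0) * g s i j)
     = (\<Sum>s<2. \<Sum>i<m. \<Sum>j<m. (if s = s0 \<and> i = i0 \<and> (j = ?x \<or> j = ?y) then g s i j else 0)
          + (if s = 1 - s0 \<and> i = j0 \<and> j = i0 then g s i j else 0))"
  proof (intro sum.cong refl)
    fix s i j assume "s \<in> {..<2::nat}" "i \<in> {..<m}" "j \<in> {..<m}"
    then have r: "s < 2" "i < m" "j < m" by auto
    have c: "Tm_adj m (s0,i0,j0) (s,i,j) \<longleftrightarrow>
      (s = s0 \<and> i = i0 \<and> (j = ?x \<or> j = ?y)) \<or> (s = 1 - s0 \<and> i = j0 \<and> j = i0)"
      by (rule adj_char[OF s0 r(1) ij r(2,3)])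
    have "\<not> (s = s0 \<and> s = 1 - s0)" using s0 by presburger
    then show "(if Tm_adj m (s0,i0,j0) (s,i,j) then 1 else 0) * g s i j
      = (if s = s0 \<and> i = i0 \<and> (j = ?x \<or> j = ?y) then g s i j else 0)
          + (if s = 1 - s0 \<and> i = j0 \<and> j = i0 then g s i j else 0)"
      unfolding c by auto
  qed
  also have "\<dots> = (\<Sum>s<2. \<Sum>i<m. \<Sum>j<m. (if s = s0 \<and> i = i0 \<and> (j = ?x \<or> j = ?y) then g s i j else 0))
       + (\<Sum>s<2. \<Sum>i<m. \<Sum>j<m. (if s = 1 - s0 \<and> i = j0 \<and> j = i0 then g s i j else 0))"
    by (simp only: sum.distrib)
  also have "\<dots> = (\<Sum>j<m. if j = ?x \<or> j = ?y then g s0 i0 j else 0) + (\<Sum>j<m. if j = i0 then g (1-s0) j0 j else 0)"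
  proof -
    have d1: "(\<Sum>s<2. \<Sum>i<m. \<Sum>j<m. (if s = s0 \<and> i = i0 \<and> (j = ?x \<or> j = ?y) then g s i j else 0))
       = (\<Sum>j<m. if j = ?x \<or> j = ?y then g s0 i0 j else 0)"
      by (rule delta3[where R = "\<lambda>j. j = ?x \<or> j = ?y"]) (use s0 ij in auto)
    have d2: "(\<Sum>s<2. \<Sum>i<m. \<Sum>j<m. (if s = 1 - s0 \<and> i = j0 \<and> j = i0 then g s i j else 0))
       = (\<Sum>j<m. if j = i0 then g (1-s0) j0 j else 0)"
      by (rule delta3[where R = "\<lambda>j. j = i0"]) (use s0 ij in auto)
    show ?thesis unfolding d1 d2 ..
  qed
  also have "\<dots> = g s0 i0 ?x + g s0 i0 ?y + g (1-s0) j0 i0"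
  proof -
    have "?x \<noteq> ?y" using xmod[OF ij(2)] ymod[OF ij(2)] m by auto
    moreover have "?x < m" "?y < m" using m by auto
    ultimately show ?thesis using ij by (simp add: sum_two)
  qed
  finally show ?thesis .
qed

lemma mod_lin: "(A + B * (X mod M)) mod M = (A + B * X) mod (M::int)"
  by (metis mod_add_right_eq mod_mult_right_eq)

lemma E_x: assumes "m > 0" "j0 < m"
  shows "E m (A + B * int ((j0+1) mod m)) = E m (A + B * int j0 + B)"
proof (rule E_cong[OF assms(1)])
  have h: "int ((j0+1) mod m) = (int j0 + 1) mod int m" by (simp add: of_nat_mod add.commute)
  have "(A + B * int ((j0+1) mod m)) mod int m = (A + B * (int j0 + 1)) mod int m"
    unfolding h by (rule mod_lin)
  also have "A + B * (int j0 + 1) = A + B * int j0 + B" by (simp add: algebra_simps)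
  finally show "(A + B * int ((j0+1) mod m)) mod int m = (A + B * int j0 + B) mod int m" .
qed

lemma E_y: assumes "m > 0" "j0 < m"
  shows "E m (A + B * int ((j0+m-1) mod m)) = E m (A + B * int j0 + - B)"
proof (rule E_cong[OF assms(1)])
  have i1: "int ((j0+m-1) mod m) = int (j0+m-1) mod int m" by (rule of_nat_mod)
  have i2: "int (j0+m-1) = int j0 - 1 + int m" using assms by linarith
  have "(A + B * int ((j0+m-1) mod m)) mod int m = (A + B * (int j0 - 1 + int m)) mod int m"
    unfolding i1 i2 by (rule mod_lin)
  also have "A + B * (int j0 - 1 + int m) = (A + B * int j0 + - B) + B * int m" by (simp add: algebra_simps)
  also have "(\<dots>) mod int m = (A + B * int j0 + - B) mod int m" by simp
  finally show "(A + B * int ((j0+m-1) mod m)) mod int m = (A + B * int j0 + - B) mod int m" .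
qed

lemma E_cval: "E m (int b) + E m (- int b) = of_real (2 * cval m b)"
  using E_cos[of m "int b"] unfolding cval_def by simp


lemma AP_entry:
  assumes m: "m \<ge> 3" and s0: "s0 < 2" and ij: "i0 < m" "j0 < m" and ab: "a < m" "b < m"
  shows "(\<Sum>s<2. \<Sum>i<m. \<Sum>j<m. (if Tm_adj m (s0,i0,j0) (s,i,j) then 1 else 0) * Pent m s i j t a b)
     = Pent m s0 i0 j0 t a b * of_real (mu m t a b)"
proof -
  have m0: "m > 0" using m by simp
  let ?B = "complex_of_real (bet m t a b)"
  have S: "(\<Sum>s<2. \<Sum>i<m. \<Sum>j<m. (if Tm_adj m (s0,i0,j0) (s,i,j) then 1 else 0) * Pent m s i j t a b)
     = Pent m s0 i0 ((j0+1) mod m) t a b + Pent m s0 i0 ((j0+m-1) mod m) t a b + Pent m (1-s0) j0 i0 t a b"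
    by (rule sum_adj[OF m s0 ij])
  show ?thesis
  proof (cases "s0 = 0")
    case True
    let ?E0 = "E m (int a * int i0 + int b * int j0)"
    have "Pent m s0 i0 ((j0+1) mod m) t a b + Pent m s0 i0 ((j0+m-1) mod m) t a b + Pent m (1-s0) j0 i0 t a b
       = E m (int a * int i0 + int b * int j0 + int b) + E m (int a * int i0 + int b * int j0 + - int b)
         + ?B * E m (int b * int j0 + int a * int i0)"
      unfolding Pent_def using True E_x[OF m0 ij(2)] E_y[OF m0 ij(2)] by simp
    also have "\<dots> = ?E0 * (E m (int b) + E m (- int b)) + ?B * ?E0"
    proof -
      have "E m (int a * int i0 + int b * int j0 + int b) = ?E0 * E m (int b)" by (rule E_add)
      moreover have "E m (int a * int i0 + int b * int j0 + - int b) = ?E0 * E m (- int b)" by (rule E_add)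
      moreover have "E m (int b * int j0 + int a * int i0) = ?E0" by (simp add: add.commute)
      ultimately show ?thesis by (simp add: distrib_left)
    qed
    also have "\<dots> = ?E0 * of_real (bet m t a b + 2 * cval m b)"
      unfolding E_cval by (simp add: algebra_simps)
    also have "\<dots> = Pent m s0 i0 j0 t a b * of_real (mu m t a b)"
      unfolding Pent_def mu_bet using True by simp
    finally show ?thesis using S by simp
  next
    case False
    then have s1: "s0 = 1" using s0 by simp
    let ?E1 = "E m (int b * int i0 + int a * int j0)"
    have "Pent m s0 i0 ((j0+1) mod m) t a b + Pent m s0 i0 ((j0+m-1) mod m) t a b + Pent m (1-s0) j0 i0 t a b
       = ?B * E m (int b * int i0 + int a * int j0 + int a) + ?B * E m (int b * int i0 + int a * int j0 + - int a)
         + E m (int a * int j0 + int b * int i0)"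
      unfolding Pent_def using s1 E_x[OF m0 ij(2)] E_y[OF m0 ij(2)] by simp
    also have "\<dots> = ?E1 * (?B * (E m (int a) + E m (- int a)) + 1)"
    proof -
      have "E m (int b * int i0 + int a * int j0 + int a) = ?E1 * E m (int a)" by (rule E_add)
      moreover have "E m (int b * int i0 + int a * int j0 + - int a) = ?E1 * E m (- int a)" by (rule E_add)
      moreover have "E m (int a * int j0 + int b * int i0) = ?E1" by (simp add: add.commute)
      ultimately show ?thesis by (simp only: distrib_left mult.assoc mult.commute mult.left_commute) simp
    qed
    also have "\<dots> = ?E1 * of_real (bet m t a b * (2 * cval m a) + 1)"
      unfolding E_cval by (simp add: algebra_simps)
    also have "\<dots> = Pent m s0 i0 j0 t a b * of_real (mu m t a b)"
      unfolding Pent_def bet_eq using s1 by (simp add: algebra_simps)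
    finally show ?thesis using S by simp
  qed
qed

lemma enc_bound: assumes "s < 2" "i < m" "j < m" shows "(s*m+i)*m+j < 2*m*(m::nat)"
proof -
  have "s*m+i+1 \<le> 2*m" using assms by (cases s) auto
  then have "(s*m+i+1)*m \<le> 2*m*m" by (rule mult_right_mono) simp
  moreover have "(s*m+i)*m+j < (s*m+i+1)*m" using assms by simp
  ultimately show ?thesis by linarith
qed

definition Pm :: "nat \<Rightarrow> complex mat" where
  "Pm m = mat (2*m*m) (2*m*m) (\<lambda>(v,k). case Tm_vertex m v of (s,i,j) \<Rightarrow>
      case Tm_vertex m k of (t,a,b) \<Rightarrow> Pent m s i j t a b)"
definition Qm :: "nat \<Rightarrow> complex mat" where
  "Qm m = mat (2*m*m) (2*m*m) (\<lambda>(k,v). case Tm_vertex m k of (t,a,b) \<Rightarrow>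
      case Tm_vertex m v of (s,i,j) \<Rightarrow> Qent m t a b s i j)"
definition Dm :: "nat \<Rightarrow> complex mat" where
  "Dm m = mat (2*m*m) (2*m*m) (\<lambda>(k,k'). if k = k' then
      (case Tm_vertex m k of (t,a,b) \<Rightarrow> complex_of_real (mu m t a b)) else 0)"

lemma Pm_idx: assumes "s < 2" "i < m" "j < m" "t < 2" "a < m" "b < m"
  shows "Pm m $$ ((s*m+i)*m+j, (t*m+a)*m+b) = Pent m s i j t a b"
  unfolding Pm_def using enc_bound[OF assms(1-3)] enc_bound[OF assms(4-6)]
  by (simp add: vertex_enc assms)

lemma Qm_idx: assumes "s < 2" "i < m" "j < m" "t < 2" "a < m" "b < m"
  shows "Qm m $$ ((t*m+a)*m+b, (s*m+i)*m+j) = Qent m t a b s i j"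
  unfolding Qm_def using enc_bound[OF assms(1-3)] enc_bound[OF assms(4-6)]
  by (simp add: vertex_enc assms)

lemma Pm_carrier: "Pm m \<in> carrier_mat (2*m*m) (2*m*m)" unfolding Pm_def by simp
lemma Qm_carrier: "Qm m \<in> carrier_mat (2*m*m) (2*m*m)" unfolding Qm_def by simp
lemma Dm_carrier: "Dm m \<in> carrier_mat (2*m*m) (2*m*m)" unfolding Dm_def by simp

lemma QP: assumes m: "m > 0" shows "Qm m * Pm m = 1\<^sub>m (2*m*m)"
proof (rule eq_matI)
  fix k k' assume k: "k < dim_row (1\<^sub>m (2*m*m))" and k': "k' < dim_col (1\<^sub>m (2*m*m))"
  then have kk: "k < 2*m*m" "k' < 2*m*m" by auto
  obtain t a b where e: "k = (t*m+a)*m+b" "t < 2" "a < m" "b < m" using vertex_dec[OF kk(1)] by blast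
  obtain t' a' b' where e': "k' = (t'*m+a')*m+b'" "t' < 2" "a' < m" "b' < m" using vertex_dec[OF kk(2)] by blast
  have "(Qm m * Pm m) $$ (k,k') = (\<Sum>v<2*m*m. Qm m $$ (k,v) * Pm m $$ (v,k'))"
    using kk Pm_carrier[of m] Qm_carrier[of m]
    by (simp add: index_mult_mat scalar_prod_def atLeast0LessThan)
  also have "\<dots> = (\<Sum>s<2. \<Sum>i<m. \<Sum>j<m. Qm m $$ (k,(s*m+i)*m+j) * Pm m $$ ((s*m+i)*m+j,k'))"
    by (rule sum3)
  also have "\<dots> = (\<Sum>s<2. \<Sum>i<m. \<Sum>j<m. Qent m t a b s i j * Pent m s i j t' a' b')"
  proof (intro sum.cong refl)
    fix s i j assume r: "s \<in> {..<2::nat}" "i \<in> {..<m}" "j \<in> {..<m}"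
    then have r': "s < 2" "i < m" "j < m" by auto
    show "Qm m $$ (k,(s*m+i)*m+j) * Pm m $$ ((s*m+i)*m+j,k') = Qent m t a b s i j * Pent m s i j t' a' b'"
      unfolding e(1) e'(1) Qm_idx[OF r' e(2-4)] Pm_idx[OF r' e'(2-4)] ..
  qed
  also have "\<dots> = (if t = t' \<and> a = a' \<and> b = b' then 1 else 0)"
    by (rule QP_entry[OF m e(2) e'(2) e(3,4) e'(3,4)])
  also have "\<dots> = 1\<^sub>m (2*m*m) $$ (k,k')"
  proof -
    have "(k = k') = (t = t' \<and> a = a' \<and> b = b')"
    proof
      assume "k = k'"
      then have "Tm_vertex m ((t*m+a)*m+b) = Tm_vertex m ((t'*m+a')*m+b')" using e(1) e'(1) by simp
      then show "t = t' \<and> a = a' \<and> b = b'"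
        unfolding vertex_enc[OF e(3,4)] vertex_enc[OF e'(3,4)] by simp
    next
      assume "t = t' \<and> a = a' \<and> b = b'"
      then show "k = k'" using e(1) e'(1) by simp
    qed
    then show ?thesis using kk by simp
  qed
  finally show "(Qm m * Pm m) $$ (k,k') = 1\<^sub>m (2*m*m) $$ (k,k')" .
qed (auto simp: Qm_def Pm_def)

lemma AP: assumes m: "m \<ge> 3"
  shows "map_mat complex_of_real (Tm_adjacency m) * Pm m = Pm m * Dm m"
proof (rule eq_matI)
  let ?A = "map_mat complex_of_real (Tm_adjacency m)"
  have m0: "m > 0" using m by simp
  fix v k assume v: "v < dim_row (Pm m * Dm m)" and k: "k < dim_col (Pm m * Dm m)"
  then have vk: "v < 2*m*m" "k < 2*m*m" by (auto simp: Pm_def Dm_def)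
  obtain s0 i0 j0 where e: "v = (s0*m+i0)*m+j0" "s0 < 2" "i0 < m" "j0 < m" using vertex_dec[OF vk(1)] by blast
  obtain t a b where e': "k = (t*m+a)*m+b" "t < 2" "a < m" "b < m" using vertex_dec[OF vk(2)] by blast
  have Aidx: "?A $$ (v, (s*m+i)*m+j) = (if Tm_adj m (s0,i0,j0) (s,i,j) then 1 else 0)"
    if "s < 2" "i < m" "j < m" for s i j
    using enc_bound[OF that] vk e unfolding Tm_adjacency_def
    by (simp add: vertex_enc that)
  have "(?A * Pm m) $$ (v,k) = (\<Sum>w<2*m*m. ?A $$ (v,w) * Pm m $$ (w,k))"
    using vk Pm_carrier[of m]
    by (simp add: index_mult_mat scalar_prod_def atLeast0LessThan Tm_adjacency_def)
  also have "\<dots> = (\<Sum>s<2. \<Sum>i<m. \<Sum>j<m. ?A $$ (v,(s*m+i)*m+j) * Pm m $$ ((s*m+i)*m+j,k))"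
    by (rule sum3)
  also have "\<dots> = (\<Sum>s<2. \<Sum>i<m. \<Sum>j<m. (if Tm_adj m (s0,i0,j0) (s,i,j) then 1 else 0) * Pent m s i j t a b)"
  proof (intro sum.cong refl)
    fix s i j assume r: "s \<in> {..<2::nat}" "i \<in> {..<m}" "j \<in> {..<m}"
    then have r': "s < 2" "i < m" "j < m" by auto
    show "?A $$ (v,(s*m+i)*m+j) * Pm m $$ ((s*m+i)*m+j,k) = (if Tm_adj m (s0,i0,j0) (s,i,j) then 1 else 0) * Pent m s i j t a b"
      unfolding e'(1) Aidx[OF r'] Pm_idx[OF r' e'(2-4)] ..
  qed
  also have "\<dots> = Pent m s0 i0 j0 t a b * of_real (mu m t a b)"
    by (rule AP_entry[OF m e(2-4) e'(3,4)])
  also have "\<dots> = (Pm m * Dm m) $$ (v,k)"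
  proof -
    have "(Pm m * Dm m) $$ (v,k) = (\<Sum>w<2*m*m. Pm m $$ (v,w) * Dm m $$ (w,k))"
      using vk Pm_carrier[of m] Dm_carrier[of m]
      by (simp add: index_mult_mat scalar_prod_def atLeast0LessThan)
    also have "\<dots> = (\<Sum>w<2*m*m. if w = k then Pm m $$ (v,k) * of_real (mu m t a b) else 0)"
      using vk e' by (intro sum.cong refl) (auto simp: Dm_def vertex_enc)
    also have "\<dots> = Pm m $$ (v,k) * of_real (mu m t a b)" using vk by simp
    finally show ?thesis using Pm_idx[OF e(2-4) e'(2-4)] e e' by simp
  qed
  finally show "(?A * Pm m) $$ (v,k) = (Pm m * Dm m) $$ (v,k)" .
qed (auto simp: Pm_def Dm_def Tm_adjacency_def)

interpretation of_real_poly_hom: map_poly_inj_idom_hom "of_real :: real \<Rightarrow> complex" ..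

lemma charpoly_prod: assumes m: "m \<ge> 3"
  shows "char_poly (Tm_adjacency m) =
    (\<Prod>k<2*m*m. case Tm_vertex m k of (t,a,b) \<Rightarrow> [: - mu m t a b, 1 :])"
proof -
  let ?n = "2*m*m"
  let ?A = "map_mat complex_of_real (Tm_adjacency m)"
  have m0: "m > 0" using m by simp
  have Ac: "Tm_adjacency m \<in> carrier_mat ?n ?n" unfolding Tm_adjacency_def by simp
  have Acc: "?A \<in> carrier_mat ?n ?n" using Ac by simp
  have QP': "Qm m * Pm m = 1\<^sub>m ?n" by (rule QP[OF m0])
  have PQ: "Pm m * Qm m = 1\<^sub>m ?n"
    by (rule mat_mult_left_right_inverse[OF Qm_carrier Pm_carrier QP'])
  have "?A = ?A * (Pm m * Qm m)" unfolding PQ using Acc by simp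
  also have "\<dots> = (?A * Pm m) * Qm m"
    by (rule assoc_mult_mat[symmetric, OF Acc Pm_carrier Qm_carrier])
  also have "\<dots> = Pm m * Dm m * Qm m" unfolding AP[OF m] ..
  finally have eq: "?A = Pm m * Dm m * Qm m" .
  have sim: "similar_mat ?A (Dm m)"
    by (rule similar_matI[OF _ PQ QP' eq]) (use Acc Pm_carrier Qm_carrier Dm_carrier in auto)
  have ut: "upper_triangular (Dm m)" unfolding upper_triangular_def Dm_def by auto
  have "char_poly ?A = char_poly (Dm m)" by (rule char_poly_similar[OF sim])
  also have "\<dots> = (\<Prod>a\<leftarrow>diag_mat (Dm m). [:- a, 1:])"
    by (rule char_poly_upper_triangular[OF Dm_carrier ut])
  also have "\<dots> = (\<Prod>k<?n. case Tm_vertex m k of (t,a,b) \<Rightarrow> [: - complex_of_real (mu m t a b), 1 :])"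
  proof -
    have "(\<Prod>a\<leftarrow>diag_mat (Dm m). [:- a, 1:]) = prod_list (map (\<lambda>k. [:- (Dm m $$ (k,k)), 1:]) [0..<?n])"
      unfolding diag_mat_def by (simp add: Dm_def o_def)
    also have "\<dots> = (\<Prod>k\<in>{0..<?n}. [:- (Dm m $$ (k,k)), 1:])"
      using prod.distinct_set_conv_list[of "[0..<?n]" "\<lambda>k. [:- (Dm m $$ (k,k)), 1:]"] by simp
    also have "\<dots> = (\<Prod>k<?n. case Tm_vertex m k of (t,a,b) \<Rightarrow> [: - complex_of_real (mu m t a b), 1 :])"
      unfolding atLeast0LessThan by (intro prod.cong refl) (auto simp: Dm_def split: prod.splits)
    finally show ?thesis .
  qed
  also have "\<dots> = map_poly complex_of_real (\<Prod>k<?n. case Tm_vertex m k of (t,a,b) \<Rightarrow> [: - mu m t a b, 1 :])"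
    unfolding of_real_poly_hom.hom_prod
    by (intro prod.cong refl) (simp add: of_real_hom.map_poly_pCons_hom split: prod.splits)
  finally have "map_poly complex_of_real (char_poly (Tm_adjacency m))
     = map_poly complex_of_real (\<Prod>k<?n. case Tm_vertex m k of (t,a,b) \<Rightarrow> [: - mu m t a b, 1 :])"
    using of_real_hom.char_poly_hom[OF Ac] by metis
  then show ?thesis by (rule of_real_poly_hom.injectivity)
qed

lemma prod_cart3: "(\<Prod>(j,l,\<sigma>)\<in>A\<times>B\<times>C. G j l \<sigma>) = (\<Prod>j\<in>A. \<Prod>l\<in>B. \<Prod>\<sigma>\<in>C. G j l \<sigma>)"
  by (simp add: prod.cartesian_product)

theorem theorem6p9:
  fixes m :: nat
  assumes "m \<ge> 3"
  shows "char_poly (Tm_adjacency m) =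
    (\<Prod>(j, l, \<sigma>) \<in> {..<m} \<times> {..<m} \<times> {1::real, -1}.
       [: - (cos (2 * pi * real j / real m) + cos (2 * pi * real l / real m)
             + \<sigma> * sqrt ((cos (2 * pi * real j / real m) - cos (2 * pi * real l / real m))^2 + 1)), 1 :])"
proof -
  define G where "G = (\<lambda>j l (\<sigma>::real). [: - (cos (2 * pi * real j / real m) + cos (2 * pi * real l / real m)
             + \<sigma> * sqrt ((cos (2 * pi * real j / real m) - cos (2 * pi * real l / real m))^2 + 1)), 1 :])"
  have G0: "G j l 1 = [: - mu m 0 j l, 1 :]" for j l
    unfolding G_def mu_def cval_def rr_def sg_def by simp
  have G1: "G j l (-1) = [: - mu m 1 j l, 1 :]" for j l
    unfolding G_def mu_def cval_def rr_def sg_def by simp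
  have "char_poly (Tm_adjacency m) =
    (\<Prod>k<2*m*m. case Tm_vertex m k of (t,a,b) \<Rightarrow> [: - mu m t a b, 1 :])"
    by (rule charpoly_prod[OF assms])
  also have "\<dots> = (\<Prod>s<2. \<Prod>a<m. \<Prod>b<m. case Tm_vertex m ((s*m+a)*m+b) of (t,a,b) \<Rightarrow> [: - mu m t a b, 1 :])"
    by (rule prod3)
  also have "\<dots> = (\<Prod>s<2. \<Prod>a<m. \<Prod>b<m. [: - mu m s a b, 1 :])"
    by (intro prod.cong refl) (simp add: vertex_enc)
  also have "\<dots> = (\<Prod>a<m. \<Prod>b<m. [: - mu m 0 a b, 1 :]) * (\<Prod>a<m. \<Prod>b<m. [: - mu m 1 a b, 1 :])"
    by (simp add: numeral_2_eq_2)
  also have "\<dots> = (\<Prod>a<m. \<Prod>b<m. [: - mu m 0 a b, 1 :] * [: - mu m 1 a b, 1 :])"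
    by (simp only: prod.distrib)
  also have "\<dots> = (\<Prod>a<m. \<Prod>b<m. \<Prod>\<sigma>\<in>{1::real,-1}. G a b \<sigma>)"
    by (simp add: G0 G1)
  also have "\<dots> = (\<Prod>(j, l, \<sigma>) \<in> {..<m} \<times> {..<m} \<times> {1::real, -1}. G j l \<sigma>)"
    by (rule prod_cart3[symmetric])
  finally show ?thesis unfolding G_def .
qed

end
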